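(* Let $\pi\subseteq\mathbb R^2\rtimes\mathrm{GL}_2(\mathbb R)$ be generated by $a=\left(\begin{bmatrix}1\\0\end{bmatrix},I_2\right)$ and $b=\left(\begin{bmatrix}0\\ 1/2\end{bmatrix},\begin{bmatrix}-1&0\\0&1\end{bmatrix}\right)$, so $\pi\backslash\mathbb R^2$ is the Klein bottle. The map $\tilde f:\mathbb R^2\to F_2(\mathbb R^2,\pi)$, $(t_1,t_2)\mapsto\bigl((0,\tfrac{t_2}{2}),(0,\tfrac{t_2}{2}-\tfrac14)\bigr)$ induces a well-defined affine $2$-valued map $f$ on $\pi\backslash\mathbb R^2$; its Nielsen number is $N(f)=1$, and $f$ has exactly one fixed point. Moreover, there is no subgroup $N\subseteq\pi\cap\mathbb R^2$ of finite index in $\pi$ such that $f$ lifts to a $2$-valued map on the torus $N\backslash\mathbb R^2$; equivalently, for every such $N$ the induced homomorphism $f_*=(\phi_1,\phi_2;\sigma):\pi\to\pi^2\rtimes S_2$ does not satisfy $f_*(N)\subseteq N^2\rtimes S_2$.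
   Context: $\pi$ acts on $\mathbb R^2$ by $(a,A)x=a+Ax$; $p:\mathbb R^2\to\pi\backslash\mathbb R^2$ is the universal cover. $F_2(\mathbb R^2,\pi)=\{(x_1,x_2):p(x_1)\ne p(x_2)\}$, and $\tilde f$ induces the $2$-valued map $f(p(x))=\{p(\tilde f_1(x)),p(\tilde f_2(x))\}$. The induced homomorphism $f_*=(\phi_1,\phi_2;\sigma)$ is defined by $\tilde f_i\circ\gamma=\phi_i(\gamma)\circ\tilde f_{\sigma_\gamma^{-1}(i)}$ for $\gamma\in\pi$. $N(f)$ is the Nielsen number (number of essential fixed point classes) of the $2$-valued map $f$. *)

theory Defs
  imports "HOL-Analysis.Analysis" "HOL-Homology.Homology" "HOL-Algebra.Coset"
begin

type_synonym pt = "real^2"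
type_synonym aff = "(real^2) \<times> (real^2^2)"

definition act :: "aff \<Rightarrow> pt \<Rightarrow> pt" where
  "act g x = fst g + snd g *v x"

definition acomp :: "aff \<Rightarrow> aff \<Rightarrow> aff" where
  "acomp g h = (fst g + snd g *v fst h, snd g ** snd h)"

definition ainv :: "aff \<Rightarrow> aff" where
  "ainv g = (- (matrix_inv (snd g) *v fst g), matrix_inv (snd g))"

definition aone :: aff where "aone = (0, mat 1)"

definition gen_a :: aff where
  "gen_a = (vector [1, 0], mat 1)"

definition gen_b :: aff where
  "gen_b = (vector [0, 1/2], vector [vector [-1, 0], vector [0, 1]])"

inductive_set piK :: "aff set" where
  one: "aone \<in> piK"
| ma: "g \<in> piK \<Longrightarrow> acomp g gen_a \<in> piK"
| mai: "g \<in> piK \<Longrightarrow> acomp g (ainv gen_a) \<in> piK"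
| mb: "g \<in> piK \<Longrightarrow> acomp g gen_b \<in> piK"
| mbi: "g \<in> piK \<Longrightarrow> acomp g (ainv gen_b) \<in> piK"

definition piG :: "aff monoid" where
  "piG = \<lparr>carrier = piK, mult = acomp, one = aone\<rparr>"

definition piTrans :: "aff set" where
  "piTrans = {g \<in> piK. snd g = mat 1}"

text \<open>p(x): the orbit of x, a point of pi\R^2.\<close>
definition orb :: "pt \<Rightarrow> pt set" where
  "orb x = (\<lambda>g. act g x) ` piK"

definition klein :: "pt set set" where
  "klein = range orb"

text \<open>The lift F (components F 1, F 2) maps into F_2(R^2,pi).\<close>
definition in_F2 :: "(nat \<Rightarrow> pt \<Rightarrow> pt) \<Rightarrow> bool" where
  "in_F2 F \<longleftrightarrow> (\<forall>x. orb (F 1 x) \<noteq> orb (F 2 x))"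

text \<open>f_*(gamma) = (phi_1(gamma), phi_2(gamma); sigma_gamma):
  F_i o gamma = phi_i(gamma) o F_{sigma^{-1}(i)}.\<close>
definition induced :: "(nat \<Rightarrow> pt \<Rightarrow> pt) \<Rightarrow> aff \<Rightarrow> (nat \<Rightarrow> aff) \<Rightarrow> (nat \<Rightarrow> nat) \<Rightarrow> bool" where
  "induced F \<gamma> \<phi> \<sigma> \<longleftrightarrow> \<sigma> permutes {1,2} \<and> (\<forall>i\<in>{1,2}. \<phi> i \<in> piK) \<and>
     (\<forall>i\<in>{1,2}. \<forall>x. F i (act \<gamma> x) = act (\<phi> i) (F (inv_into UNIV \<sigma> i) x))"

definition wd_2valued :: "(nat \<Rightarrow> pt \<Rightarrow> pt) \<Rightarrow> bool" where
  "wd_2valued F \<longleftrightarrow> (\<forall>i\<in>{1,2}. continuous_on UNIV (F i)) \<and> in_F2 F \<and>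
     (\<forall>\<gamma>\<in>piK. \<exists>\<phi> \<sigma>. induced F \<gamma> \<phi> \<sigma>)"

definition mv :: "(nat \<Rightarrow> pt \<Rightarrow> pt) \<Rightarrow> pt set \<Rightarrow> pt set set" where
  "mv F q = (SOME S. \<exists>x. q = orb x \<and> S = {orb (F 1 x), orb (F 2 x)})"

definition fixpts :: "(nat \<Rightarrow> pt \<Rightarrow> pt) \<Rightarrow> pt set set" where
  "fixpts F = {q \<in> klein. q \<in> mv F q}"

text \<open>Local fixed point index of an isolated fixed point x0 of g : R^2 \<rightarrow> R^2:
  the Brouwer degree of (x - g x)/|x - g x| on small circles around x0.\<close>
definition isolated_fp :: "(pt \<Rightarrow> pt) \<Rightarrow> pt \<Rightarrow> bool" where
  "isolated_fp g x0 \<longleftrightarrow> g x0 = x0 \<and> (\<exists>e>0. \<forall>y. dist y x0 < e \<and> g y = y \<longrightarrow> y = x0)"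

definition circ_map :: "(pt \<Rightarrow> pt) \<Rightarrow> pt \<Rightarrow> real \<Rightarrow> (nat \<Rightarrow> real) \<Rightarrow> nat \<Rightarrow> real" where
  "circ_map g x0 r u = (let y = x0 + r *\<^sub>R vector [u 0, u 1]; w = y - g y in
      (\<lambda>k. if k = 0 then w$1 / norm w else if k = 1 then w$2 / norm w else 0))"

definition fp_index :: "(pt \<Rightarrow> pt) \<Rightarrow> pt \<Rightarrow> int" where
  "fp_index g x0 = (THE d. \<exists>e>0. \<forall>r. 0 < r \<and> r < e \<longrightarrow> Brouwer_degree2 1 (circ_map g x0 r) = d)"

definition liftFix :: "(nat \<Rightarrow> pt \<Rightarrow> pt) \<Rightarrow> aff \<Rightarrow> nat \<Rightarrow> pt set" where
  "liftFix F \<gamma> i = {x. act \<gamma> (F i x) = x}"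

definition fp_classes :: "(nat \<Rightarrow> pt \<Rightarrow> pt) \<Rightarrow> pt set set set" where
  "fp_classes F = {orb ` liftFix F \<gamma> i | \<gamma> i. \<gamma> \<in> piK \<and> i \<in> {1,2}} - {{}}"

text \<open>Index of a class (defined here for classes made of finitely many isolated fixed points):
  the sum of the local indices of its fixed points.\<close>
definition essential :: "(nat \<Rightarrow> pt \<Rightarrow> pt) \<Rightarrow> pt set set \<Rightarrow> bool" where
  "essential F C \<longleftrightarrow> (\<exists>\<gamma>\<in>piK. \<exists>i\<in>{1,2}. C = orb ` liftFix F \<gamma> i \<and> finite C \<and>
      (\<forall>x\<in>liftFix F \<gamma> i. isolated_fp (\<lambda>y. act \<gamma> (F i y)) x) \<and>
      (\<Sum>q\<in>C. fp_index (\<lambda>y. act \<gamma> (F i y)) (SOME x. x \<in> liftFix F \<gamma> i \<and> orb x = q)) \<noteq> 0)"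

definition nielsen :: "(nat \<Rightarrow> pt \<Rightarrow> pt) \<Rightarrow> nat" where
  "nielsen F = card {C \<in> fp_classes F. essential F C}"

definition ftilde :: "nat \<Rightarrow> pt \<Rightarrow> pt" where
  "ftilde i t = (if i = 1 then vector [0, t$2 / 2] else vector [0, t$2 / 2 - 1/4])"

end

theory Submission
  imports Defs
begin

definition isg :: "int \<Rightarrow> int" where "isg n = (if even n then 1 else -1)"
definition Rm :: "real^2^2" where "Rm = vector [vector [-1, 0], vector [0, 1]]"
definition elt :: "int \<Rightarrow> int \<Rightarrow> aff" where
  "elt m n = (vector [real_of_int m, real_of_int n / 2], if even n then mat 1 else Rm)"

lemma v2_eq: "(x::real^2) = y \<longleftrightarrow> x$1 = y$1 \<and> x$2 = y$2"
  by (simp add: vec_eq_iff forall_2)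

lemma m2_eq: "(x::real^2^2) = y \<longleftrightarrow> x$1$1 = y$1$1 \<and> x$1$2 = y$1$2 \<and> x$2$1 = y$2$1 \<and> x$2$2 = y$2$2"
  by (auto simp: vec_eq_iff forall_2)

lemma mat1_mv: "mat 1 *v (v::real^2) = v" by simp
lemma Rm_mv: "Rm *v v = vector [- v$1, v$2]"
  by (simp add: v2_eq Rm_def matrix_vector_mult_def sum_2)
lemma Rm_Rm: "Rm ** Rm = mat 1"
  by (simp add: m2_eq Rm_def matrix_matrix_mult_def sum_2 mat_def)

lemma matrix_inv_eq:
  fixes A B :: "real^2^2"
  assumes "A ** B = mat 1" "B ** A = mat 1" shows "matrix_inv A = B"
proof -
  have "\<exists>A'. A ** A' = mat 1 \<and> A' ** A = mat 1" using assms by blast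
  then have h: "A ** matrix_inv A = mat 1 \<and> matrix_inv A ** A = mat 1"
    unfolding matrix_inv_def by (rule someI_ex)
  have "matrix_inv A = matrix_inv A ** (A ** B)" using assms by simp
  also have "\<dots> = (matrix_inv A ** A) ** B" by (simp add: matrix_mul_assoc)
  also have "\<dots> = B" using h by simp
  finally show ?thesis .
qed

lemma inv_mat1: "matrix_inv (mat 1 :: real^2^2) = mat 1"
  by (rule matrix_inv_eq) simp_all
lemma inv_Rm: "matrix_inv Rm = Rm"
  by (rule matrix_inv_eq) (simp_all add: Rm_Rm)

lemma sg_even: "even n \<Longrightarrow> isg n = 1" by (simp add: isg_def)
lemma sg_odd: "odd n \<Longrightarrow> isg n = -1" by (simp add: isg_def)

lemma act_elt: "act (elt m n) x = vector [of_int (isg n) * x$1 + of_int m, x$2 + of_int n / 2]"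
  by (simp add: act_def elt_def v2_eq Rm_mv isg_def)

lemma acomp_elt: "acomp (elt m n) (elt m' n') = elt (m + isg n * m') (n + n')"
  by (simp add: acomp_def elt_def isg_def v2_eq Rm_mv Rm_Rm)

lemma gen_a_elt: "gen_a = elt 1 0" by (simp add: gen_a_def elt_def v2_eq)
lemma gen_b_elt: "gen_b = elt 0 1" by (simp add: gen_b_def elt_def v2_eq Rm_def)
lemma ainv_a: "ainv (elt 1 0) = elt (-1) 0" by (simp flip: gen_a_elt add: gen_a_def elt_def ainv_def inv_mat1 v2_eq)
lemma ainv_b: "ainv (elt 0 1) = elt 0 (-1)"
  by (simp flip: gen_b_elt add: gen_b_def elt_def ainv_def v2_eq Rm_mv flip: Rm_def add: inv_Rm)
lemma aone_elt: "aone = elt 0 0" by (simp add: aone_def elt_def v2_eq)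

lemma piK_sub: "g \<in> piK \<Longrightarrow> \<exists>m n. g = elt m n"
proof (induction rule: piK.induct)
  case one then show ?case by (auto simp: aone_elt)
next
  case (ma g) then show ?case by (metis gen_a_elt acomp_elt)
next
  case (mai g) then show ?case by (metis gen_a_elt ainv_a acomp_elt)
next
  case (mb g) then show ?case by (metis gen_b_elt acomp_elt)
next
  case (mbi g) then show ?case by (metis gen_b_elt ainv_b acomp_elt)
qed

lemma elt_0n: "elt 0 (int k) \<in> piK \<and> elt 0 (- int k) \<in> piK"
proof (induction k)
  case 0 then show ?case using piK.one by (simp add: aone_elt)
next
  case (Suc k)
  then have "acomp (elt 0 (int k)) gen_b \<in> piK" "acomp (elt 0 (- int k)) (ainv gen_b) \<in> piK"
    using piK.mb piK.mbi by auto
  then have A: "elt 0 (int k + 1) \<in> piK" "elt 0 (- int k + - 1) \<in> piK"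
    by (simp_all only: gen_b_elt ainv_b acomp_elt mult_zero_right add_0_right)
  have e: "int (Suc k) = int k + 1" "- int (Suc k) = - int k + - 1" by simp_all
  have "elt 0 (int (Suc k)) \<in> piK" using A(1) e(1) by metis
  moreover have "elt 0 (- int (Suc k)) \<in> piK" using A(2) e(2) by metis
  ultimately show ?case by (rule conjI)
qed

lemma elt_n: "elt 0 n \<in> piK"
  using elt_0n[of "nat n"] elt_0n[of "nat (-n)"] by (cases "n \<ge> 0") auto

lemma elt_mn: "elt (int k * isg n) n \<in> piK \<and> elt (- int k * isg n) n \<in> piK"
proof (induction k)
  case 0 then show ?case using elt_n by simp
next
  case (Suc k)
  then have "acomp (elt (int k * isg n) n) gen_a \<in> piK" "acomp (elt (- int k * isg n) n) (ainv gen_a) \<in> piK"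
    using piK.ma piK.mai by auto
  then have A: "elt (int k * isg n + isg n * 1) (n + 0) \<in> piK" "elt (- int k * isg n + isg n * - 1) (n + 0) \<in> piK"
    by (simp_all only: gen_a_elt ainv_a acomp_elt)
  have e: "int (Suc k) * isg n = int k * isg n + isg n * 1" "- int (Suc k) * isg n = - int k * isg n + isg n * - 1"
    "n = n + 0" by (simp_all add: algebra_simps)
  have "elt (int (Suc k) * isg n) n \<in> piK" using A(1) e(1) e(3) by metis
  moreover have "elt (- int (Suc k) * isg n) n \<in> piK" using A(2) e(2) e(3) by metis
  ultimately show ?case by (rule conjI)
qed

lemma isg_sq: "isg n * isg n = 1" by (simp add: isg_def)

lemma elt_in: "elt m n \<in> piK"
proof -
  have "m = int (nat (m * isg n)) * isg n \<or> m = - int (nat (- (m * isg n))) * isg n"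
    by (cases "m * isg n \<ge> 0") (auto simp: mult.assoc isg_sq)
  then show ?thesis using elt_mn by metis
qed

lemma piK_iff: "g \<in> piK \<longleftrightarrow> (\<exists>m n. g = elt m n)"
  using piK_sub elt_in by blast


lemma act_acomp: "act (acomp g h) x = act g (act h x)"
  by (simp add: act_def acomp_def matrix_vector_mul_assoc matrix_vector_right_distrib add.assoc)

lemma isg_minus: "isg (- n) = isg n" by (simp add: isg_def)

lemma act_one: "act aone x = x" by (simp add: act_def aone_def)

lemma orb_act: "y \<in> orb x \<longleftrightarrow> (\<exists>m n. y = act (elt m n) x)"
  unfolding orb_def image_iff Bex_def piK_iff by blast

lemma mem_orb: "y \<in> orb x \<longleftrightarrow> (\<exists>m n. y$1 = of_int (isg n) * x$1 + of_int m \<and> y$2 = x$2 + of_int n / 2)"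
  by (simp add: orb_act act_elt v2_eq)

lemma orb_trans: "y \<in> orb x \<Longrightarrow> z \<in> orb y \<Longrightarrow> z \<in> orb x"
  unfolding orb_act by (metis act_acomp acomp_elt)

lemma orb_sym: "y \<in> orb x \<Longrightarrow> x \<in> orb y"
proof -
  assume "y \<in> orb x"
  then obtain m n where y: "y = act (elt m n) x" by (auto simp: orb_act)
  have "acomp (elt (- isg n * m) (- n)) (elt m n) = aone"
    by (simp add: acomp_elt isg_minus aone_elt)
  then have "act (elt (- isg n * m) (- n)) y = x"
    by (metis y act_acomp act_one)
  then show ?thesis by (auto simp: orb_act)
qed

lemma orb_refl: "x \<in> orb x"
  unfolding orb_def by (rule image_eqI[of _ _ aone]) (simp_all add: act_one piK.one)

lemma orb_eq_iff: "orb x = orb y \<longleftrightarrow> y \<in> orb x"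
proof
  assume "orb x = orb y" then show "y \<in> orb x" using orb_refl by simp
next
  assume h: "y \<in> orb x"
  show "orb x = orb y"
    using h orb_trans orb_sym by blast
qed

lemma ft1: "ftilde 1 x = vector [0, x$2/2]" by (simp add: ftilde_def)
lemma ft2: "ftilde 2 x = vector [0, x$2/2 - 1/4]" by (simp add: ftilde_def)
lemma ft1': "ftilde (Suc 0) x = vector [0, x$2/2]" by (simp add: ftilde_def)

lemma no_half: "(of_int n :: real) = of_int k / 2 \<Longrightarrow> odd k \<Longrightarrow> False"
proof -
  assume "(of_int n :: real) = of_int k / 2" "odd k"
  then have "(of_int (2*n) :: real) = of_int k" by simp
  then have "2*n = k" by (simp only: of_int_eq_iff)
  then show False using \<open>odd k\<close> by presburger
qed

lemma inF2: "in_F2 ftilde"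
  unfolding in_F2_def
proof
  fix x
  show "orb (ftilde 1 x) \<noteq> orb (ftilde 2 x)"
  proof
    assume "orb (ftilde 1 x) = orb (ftilde 2 x)"
    then obtain m n where "x$2/2 - 1/4 = x$2/2 + of_int n / (2::real)"
      by (auto simp: orb_eq_iff mem_orb ft1 ft1' ft2)
    then have "(of_int n::real) = of_int (-1) / 2" by simp
    then show False using no_half by fastforce
  qed
qed

lemma ft_eq: "ftilde i = (\<lambda>t. \<chi> j. if j = 1 then 0 else t$2/2 - (if i = 1 then 0 else 1/4))"
  by (auto simp: ftilde_def v2_eq fun_eq_iff)

lemma ft_cont: "continuous_on UNIV (ftilde i)"
  unfolding ft_eq
proof (rule continuous_on_vec_lambda)
  fix j :: 2
  show "continuous_on UNIV (\<lambda>t::real^2. if j = 1 then 0 else t$2/2 - (if i = 1 then 0 else 1/4))"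
    by (cases "j = 1") (auto intro!: continuous_intros)
qed

lemma induced_ex: "\<gamma> \<in> piK \<Longrightarrow> \<exists>\<phi> \<sigma>. induced ftilde \<gamma> \<phi> \<sigma>"
proof -
  assume "\<gamma> \<in> piK"
  then obtain m n where g: "\<gamma> = elt m n" by (auto simp: piK_iff)
  show ?thesis
  proof (cases "even n")
    case True
    then obtain k where n: "n = 2*k" by blast
    have "induced ftilde \<gamma> (\<lambda>_. elt 0 k) id"
      unfolding induced_def using elt_in
      by (auto simp: g n act_elt ft1 ft1' ft2 v2_eq permutes_id)
    then show ?thesis by blast
  next
    case False
    then obtain k where n: "n = 2*k+1" by (metis odd_two_times_div_two_succ)
    have "induced ftilde \<gamma> (\<lambda>i. if i = 1 then elt 0 (k+1) else elt 0 k) (Transposition.transpose 1 2)"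
      unfolding induced_def using elt_in
      by (auto simp: g n act_elt ft1 ft1' ft2 v2_eq permutes_swap_id Transposition.transpose_def add_divide_distrib)
    then show ?thesis by blast
  qed
qed

lemma wd: "wd_2valued ftilde"
  unfolding wd_2valued_def using ft_cont inF2 induced_ex by blast


declare One_nat_def [simp del]

definition Pv :: "real \<Rightarrow> pt set set" where
  "Pv s = {orb (vector [0, s]), orb (vector [0, s - 1/4])}"

lemma Pv_quarter: "Pv (s + 1/4) = Pv s"
proof -
  have "orb (vector [0, s + 1/4]) = orb (vector [0, s - 1/4])"
    unfolding orb_eq_iff mem_orb by (rule exI[of _ 0], rule exI[of _ "-1"]) simp
  then show ?thesis by (auto simp: Pv_def)
qed

lemma Pv_nat: "Pv (s + of_nat k / 4) = Pv s"
proof (induction k arbitrary: s)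
  case 0 then show ?case by simp
next
  case (Suc k)
  have "Pv (s + of_nat (Suc k) / 4) = Pv ((s + of_nat k / 4) + 1/4)"
    by (rule arg_cong[where f=Pv]) (simp add: field_simps)
  also have "\<dots> = Pv (s + of_nat k / 4)" by (rule Pv_quarter)
  also have "\<dots> = Pv s" by (rule Suc.IH)
  finally show ?case .
qed

lemma Pv_int: "Pv (s + of_int n / 4) = Pv s"
proof (cases "n \<ge> 0")
  case True
  then show ?thesis using Pv_nat[of s "nat n"] by simp
next
  case False
  then have n: "n = - int (nat (-n))" by simp
  have "Pv (s + of_int n / 4) = Pv ((s + of_int n / 4) + of_nat (nat (-n)) / 4)"
    by (rule Pv_nat[symmetric])
  also have "\<dots> = Pv s" using False by simp
  finally show ?thesis .
qed

lemma mv_orb: "mv ftilde (orb x) = Pv (x$2/2)"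
  unfolding mv_def
proof (rule some_equality)
  show "\<exists>x'. orb x = orb x' \<and> Pv (x$2/2) = {orb (ftilde 1 x'), orb (ftilde 2 x')}"
    by (rule exI[of _ x]) (simp add: Pv_def ft1 ft2)
next
  fix S assume "\<exists>x'. orb x = orb x' \<and> S = {orb (ftilde 1 x'), orb (ftilde 2 x')}"
  then obtain x' where e: "orb x = orb x'" and S: "S = {orb (ftilde 1 x'), orb (ftilde 2 x')}" by blast
  from e obtain m n where "x'$2 = x$2 + of_int n / 2" by (auto simp: orb_eq_iff mem_orb)
  then have "x'$2/2 = x$2/2 + of_int n / 4" by simp
  then have "Pv (x'$2/2) = Pv (x$2/2)" by (metis Pv_int)
  then show "S = Pv (x$2/2)" using S by (simp add: Pv_def ft1 ft2)
qed

lemma orb_eq_sym: "orb x = orb y \<Longrightarrow> x \<in> orb y"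
  using orb_refl by blast

lemma fix_orb: "orb x \<in> Pv (x$2/2) \<Longrightarrow> orb x = orb 0"
proof -
  assume "orb x \<in> Pv (x$2/2)"
  then consider "orb x = orb (vector [0, x$2/2])" | "orb x = orb (vector [0, x$2/2 - 1/4])"
    by (auto simp: Pv_def)
  then have "x \<in> orb 0"
  proof cases
    case 1
    then obtain m n where "x$1 = of_int m" "x$2 = x$2/2 + of_int n / 2"
      using orb_eq_sym[OF 1] by (auto simp: mem_orb)
    then show ?thesis unfolding mem_orb
      by (intro exI[of _ m] exI[of _ "2*n"]) simp
  next
    case 2
    then obtain m n where "x$1 = of_int m" "x$2 = x$2/2 - 1/4 + of_int n / 2"
      using orb_eq_sym[OF 2] by (auto simp: mem_orb)
    then show ?thesis unfolding mem_orb
      by (intro exI[of _ m] exI[of _ "2*n-1"]) (simp add: field_simps)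
  qed
  then show ?thesis using orb_sym orb_eq_iff by blast
qed

lemma vec00: "vector [0, 0] = (0::real^2)" by (simp add: v2_eq)

lemma fixpts_eq: "fixpts ftilde = {orb 0}"
proof
  show "fixpts ftilde \<subseteq> {orb 0}"
    unfolding fixpts_def klein_def using fix_orb mv_orb by auto
next
  have "orb 0 \<in> mv ftilde (orb 0)" by (simp add: mv_orb Pv_def vec00)
  then show "{orb 0} \<subseteq> fixpts ftilde" by (auto simp: fixpts_def klein_def)
qed

lemma ftne: "i \<noteq> 1 \<Longrightarrow> ftilde i x = vector [0, x$2/2 - 1/4]" by (simp add: ftilde_def)

lemma liftFix_orb: "\<gamma> \<in> piK \<Longrightarrow> x \<in> liftFix ftilde \<gamma> i \<Longrightarrow> orb x = orb 0"
proof -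
  assume "\<gamma> \<in> piK" "x \<in> liftFix ftilde \<gamma> i"
  then obtain m n where h: "act (elt m n) (ftilde i x) = x" by (auto simp: piK_iff liftFix_def)
  have "x \<in> orb 0"
  proof (cases "i = 1")
    case True
    then have "x$1 = of_int m" "x$2 = x$2/2 + of_int n / 2"
      using h by (auto simp: act_elt ft1 v2_eq)
    then show ?thesis unfolding mem_orb
      by (intro exI[of _ m] exI[of _ "2*n"]) simp
  next
    case False
    then have "x$1 = of_int m" "x$2 = x$2/2 - 1/4 + of_int n / 2"
      using h by (auto simp: act_elt ftne v2_eq)
    then show ?thesis unfolding mem_orb
      by (intro exI[of _ m] exI[of _ "2*n-1"]) (simp add: field_simps)
  qed
  then show ?thesis using orb_sym orb_eq_iff by blast
qed

lemma liftFix_one: "liftFix ftilde aone 1 = {0}"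
proof -
  have "act aone (ftilde 1 x) = x \<longleftrightarrow> x = 0" for x
  proof
    assume "act aone (ftilde 1 x) = x"
    then have "x$1 = 0" "x$2 = x$2/2" by (simp_all add: act_one ft1 v2_eq)
    then show "x = 0" by (simp add: v2_eq)
  next
    assume "x = 0" then show "act aone (ftilde 1 x) = x" by (simp add: act_one ft1 v2_eq)
  qed
  then show ?thesis unfolding liftFix_def by blast
qed

lemma fp_classes_eq: "fp_classes ftilde = {{orb 0}}"
proof
  show "fp_classes ftilde \<subseteq> {{orb 0}}"
  proof
    fix C assume "C \<in> fp_classes ftilde"
    then obtain \<gamma> i where g: "\<gamma> \<in> piK" and C: "C = orb ` liftFix ftilde \<gamma> i" "C \<noteq> {}"
      unfolding fp_classes_def by blast
    have "C \<subseteq> {orb 0}" using C(1) liftFix_orb[OF g] by blast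
    then show "C \<in> {{orb 0}}" using C(2) by blast
  qed
next
  have "orb ` liftFix ftilde aone 1 = {orb 0}" by (simp add: liftFix_one)
  then show "{{orb 0}} \<subseteq> fp_classes ftilde"
    unfolding fp_classes_def using piK.one by blast
qed


declare One_nat_def [simp del]

definition Hc :: "real \<Rightarrow> (nat \<Rightarrow> real) \<Rightarrow> nat \<Rightarrow> real" where
  "Hc c x = (\<lambda>k. if k = 0 then x 0 / sqrt ((x 0)^2 + (c * x 1)^2)
               else if k = 1 then c * x 1 / sqrt ((x 0)^2 + (c * x 1)^2) else 0)"

lemma ts_ns1_set: "topspace (nsphere 1) = {x. (\<Sum>i\<le>1. x i ^ 2) = 1 \<and> (\<forall>i>1. x i = (0::real))}"
  unfolding nsphere by simp
lemma sum_le1: "(\<Sum>i\<le>1::nat. f i) = f 0 + (f 1::real)" by (simp add: One_nat_def)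
lemma ts_ns1: "x \<in> topspace (nsphere 1) \<longleftrightarrow> (x 0)^2 + (x 1)^2 = 1 \<and> (\<forall>i>1. x i = 0)"
  unfolding ts_ns1_set sum_le1 by simp

lemma den_pos: "c \<noteq> 0 \<Longrightarrow> (x 0)^2 + (x 1)^2 = 1 \<Longrightarrow> (x 0)^2 + (c * x 1)^2 > (0::real)"
proof -
  assume c: "c \<noteq> 0" and s: "(x 0)^2 + (x 1)^2 = 1"
  have "x 0 \<noteq> 0 \<or> x 1 \<noteq> 0" using s by auto
  then show ?thesis using c
    by (metis add_nonneg_pos add_pos_nonneg mult_eq_0_iff power_mult_distrib zero_le_power2 zero_less_power2)
qed

lemma Hc_cont: "c \<noteq> 0 \<Longrightarrow> continuous_map (nsphere 1) (nsphere 1) (Hc c)"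
proof -
  assume c: "c \<noteq> 0"
  have pr: "continuous_map (nsphere 1) euclideanreal (\<lambda>x. x k)" for k
    by (rule continuous_map_nsphere_projection)
  have nz: "sqrt ((x 0)^2 + (c * x 1)^2) \<noteq> 0" if "x \<in> topspace (nsphere 1)" for x
  proof -
    have "(x 0)^2 + (x 1)^2 = 1" using that ts_ns1 by blast
    then have "(x 0)^2 + (c * x 1)^2 > 0" using den_pos[OF c] by blast
    then show ?thesis by (metis real_sqrt_gt_zero less_irrefl)
  qed
  have cm: "continuous_map (nsphere 1) euclideanreal (\<lambda>x. Hc c x k)" for k
    unfolding Hc_def
    by (cases "k = 0"; cases "k = 1") (auto intro!: continuous_intros pr nz)
  have img: "Hc c x \<in> topspace (nsphere 1)" if "x \<in> topspace (nsphere 1)" for x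
  proof -
    have s1: "(x 0)^2 + (x 1)^2 = 1" using that ts_ns1 by blast
    then have p: "(x 0)^2 + (c * x 1)^2 > 0" using den_pos[OF c] by blast
    let ?P = "(x 0)^2 + (c * x 1)^2"
    have "(Hc c x 0)^2 + (Hc c x 1)^2 = (x 0)^2 / ?P + (c * x 1)^2 / ?P"
    proof -
      have nz0: "\<not> (x 0 = 0 \<and> (c = 0 \<or> x 1 = 0))"
      proof
        assume "x 0 = 0 \<and> (c = 0 \<or> x 1 = 0)"
        then have "(x 0)^2 + (c * x 1)^2 = 0" by auto
        with p show False by simp
      qed
      then show ?thesis using p by (simp add: Hc_def power_divide)
    qed
    also have "\<dots> = ?P / ?P" by (simp only: add_divide_distrib)
    also have "\<dots> = 1" using p by (metis divide_self less_irrefl)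
    finally have q: "(Hc c x 0)^2 + (Hc c x 1)^2 = 1" .
    have z: "\<forall>i>1. Hc c x i = 0" by (simp add: Hc_def)
    show ?thesis using q z ts_ns1 by blast
  qed
  have cp: "continuous_map (nsphere 1) (powertop_real UNIV) (Hc c)"
    using cm by (simp add: continuous_map_componentwise_UNIV)
  have "continuous_map (nsphere 1) (subtopology (powertop_real UNIV) (topspace (nsphere 1))) (Hc c)"
    using cp img by (simp add: continuous_map_in_subtopology image_subset_iff)
  moreover have "subtopology (powertop_real UNIV) (topspace (nsphere 1)) = nsphere 1"
    unfolding nsphere by simp
  ultimately show ?thesis by simp
qed


lemma Hc_inv: "c \<noteq> 0 \<Longrightarrow> x \<in> topspace (nsphere 1) \<Longrightarrow> Hc (1/c) (Hc c x) = x"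
proof -
  assume c: "c \<noteq> 0" and x: "x \<in> topspace (nsphere 1)"
  have s1: "(x 0)^2 + (x 1)^2 = 1" and z: "\<forall>i>1. x i = 0" using x ts_ns1 by blast+
  define D where "D = sqrt ((x 0)^2 + (c * x 1)^2)"
  have Dp: "D > 0" unfolding D_def using den_pos[OF c s1] by simp
  have h0: "Hc c x 0 = x 0 / D" and h1: "Hc c x 1 = c * x 1 / D" by (simp_all add: Hc_def D_def)
  have "(Hc c x 0)^2 + (1/c * Hc c x 1)^2 = ((x 0)^2 + (x 1)^2) / D^2"
    using c Dp by (simp add: h0 h1 power_divide add_divide_distrib power_mult_distrib)
  also have "\<dots> = (1/D)^2" using s1 by (simp add: power_divide)
  finally have e: "sqrt ((Hc c x 0)^2 + (1/c * Hc c x 1)^2) = 1/D" using Dp by simp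
  have a0: "Hc (1/c) y 0 = y 0 / sqrt ((y 0)^2 + (1/c * y 1)^2)" for y by (simp add: Hc_def)
  have a1: "Hc (1/c) y 1 = 1/c * y 1 / sqrt ((y 0)^2 + (1/c * y 1)^2)" for y by (simp add: Hc_def)
  show ?thesis
  proof
    fix k
    show "Hc (1/c) (Hc c x) k = x k"
    proof (cases "k = 0")
      case True
      have "Hc (1/c) (Hc c x) 0 = Hc c x 0 / sqrt ((Hc c x 0)^2 + (1/c * Hc c x 1)^2)" by (rule a0)
      also have "\<dots> = (x 0 / D) / (1/D)" by (subst e) (simp only: h0)
      also have "\<dots> = x 0" using Dp by simp
      finally show ?thesis using True by simp
    next
      case False
      show ?thesis
      proof (cases "k = 1")
        case True
        have "Hc (1/c) (Hc c x) 1 = 1/c * Hc c x 1 / sqrt ((Hc c x 0)^2 + (1/c * Hc c x 1)^2)" by (rule a1)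
        also have "\<dots> = (1/c * (c * x 1 / D)) / (1/D)" by (subst e) (simp only: h1)
        also have "\<dots> = x 1" using Dp c by simp
        finally show ?thesis using True by simp
      next
        case False
        then show ?thesis using \<open>k \<noteq> 0\<close> z by (simp add: Hc_def)
      qed
    qed
  qed
qed

lemma Hc_deg: "c \<noteq> 0 \<Longrightarrow> Brouwer_degree2 1 (Hc c) \<noteq> 0"
proof -
  assume c: "c \<noteq> 0"
  have "homeomorphic_maps (nsphere 1) (nsphere 1) (Hc c) (Hc (1/c))"
    unfolding homeomorphic_maps_def using c Hc_cont Hc_inv[OF c] Hc_inv[of "1/c"] by simp
  then have "homeomorphic_map (nsphere 1) (nsphere 1) (Hc c)"
    using homeomorphic_map_maps by blast
  then show ?thesis using Brouwer_degree2_homeomorphic_map by fastforce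
qed

lemma norm2: "norm (w::real^2) = sqrt ((w$1)^2 + (w$2)^2)"
  by (simp add: norm_vec_def L2_set_def sum_2)

lemma circ_eq: "r > 0 \<Longrightarrow> circ_map (\<lambda>y. act aone (ftilde 1 y)) 0 r = Hc (1/2)"
proof
  fix u :: "nat \<Rightarrow> real"
  assume r: "r > 0"
  define w where "w = (r *\<^sub>R vector [u 0, u 1] - act aone (ftilde 1 (r *\<^sub>R vector [u 0, u 1])) :: real^2)"
  have w1: "w$1 = r * u 0" and w2: "w$2 = r * (1/2 * u 1)"
    by (simp_all add: w_def act_def aone_def ftilde_def)
  have "(w$1)^2 + (w$2)^2 = r^2 * ((u 0)^2 + (1/2 * u 1)^2)"
    by (simp add: w1 w2 power2_eq_square algebra_simps)
  then have "norm w = sqrt (r^2 * ((u 0)^2 + (1/2 * u 1)^2))"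
    by (simp add: norm2)
  also have "\<dots> = r * sqrt ((u 0)^2 + (1/2 * u 1)^2)" using r by (simp add: real_sqrt_mult)
  finally have nw: "norm w = r * sqrt ((u 0)^2 + (1/2 * u 1)^2)" .
  show "circ_map (\<lambda>y. act aone (ftilde 1 y)) 0 r u = Hc (1/2) u"
    unfolding circ_map_def Let_def
    using r by (simp add: w_def[symmetric] nw w1 w2 Hc_def fun_eq_iff mult_divide_mult_cancel_left_if)
qed

lemma fp_index_ne: "fp_index (\<lambda>y. act aone (ftilde 1 y)) 0 \<noteq> 0"
proof -
  let ?D = "Brouwer_degree2 1 (Hc (1/2))"
  have "fp_index (\<lambda>y. act aone (ftilde 1 y)) 0 = ?D"
    unfolding fp_index_def
  proof (rule the_equality)
    show "\<exists>e>0. \<forall>r. 0 < r \<and> r < e \<longrightarrow> Brouwer_degree2 1 (circ_map (\<lambda>y. act aone (ftilde 1 y)) 0 r) = ?D"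
      by (rule exI[of _ 1]) (simp add: circ_eq)
  next
    fix d assume "\<exists>e>0. \<forall>r. 0 < r \<and> r < e \<longrightarrow> Brouwer_degree2 1 (circ_map (\<lambda>y. act aone (ftilde 1 y)) 0 r) = d"
    then obtain e where e: "e > 0" "\<forall>r. 0 < r \<and> r < e \<longrightarrow> Brouwer_degree2 1 (circ_map (\<lambda>y. act aone (ftilde 1 y)) 0 r) = d" by blast
    then have "Brouwer_degree2 1 (circ_map (\<lambda>y. act aone (ftilde 1 y)) 0 (e/2)) = d" by simp
    then show "d = ?D" using e by (simp add: circ_eq)
  qed
  then show ?thesis using Hc_deg by simp
qed


lemma elt_inj: "elt m n = elt m' n' \<Longrightarrow> m = m' \<and> n = n'"
  by (simp add: elt_def v2_eq)

lemma descent: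
  assumes sub: "subgroup N piG" and tr: "N \<subseteq> piTrans"
    and P: "\<forall>\<gamma>\<in>N. \<exists>\<phi> \<sigma>. induced ftilde \<gamma> \<phi> \<sigma> \<and> \<phi> 1 \<in> N \<and> \<phi> 2 \<in> N"
  shows "0 < k \<Longrightarrow> elt 0 (2 * int k) \<notin> N"
proof (induction k rule: less_induct)
  case (less k)
  show ?case
  proof
    assume inN: "elt 0 (2 * int k) \<in> N"
    then obtain \<phi> \<sigma> where ind: "induced ftilde (elt 0 (2 * int k)) \<phi> \<sigma>" and p1: "\<phi> 1 \<in> N"
      using P by blast
    from ind have ph: "\<phi> 1 \<in> piK"
      unfolding induced_def by blast
    from ind have eq: "\<forall>x. ftilde 1 (act (elt 0 (2 * int k)) x) = act (\<phi> 1) (ftilde (inv_into UNIV \<sigma> 1) x)"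
      unfolding induced_def by blast
    obtain m n where phi: "\<phi> 1 = elt m n" using ph piK_iff by blast
    let ?j = "inv_into UNIV \<sigma> 1"
    have e0: "ftilde 1 (act (elt 0 (2 * int k)) 0) = act (elt m n) (ftilde ?j 0)"
      using eq[rule_format, of 0] by (simp only: phi)
    have a0: "act (elt 0 (2 * int k)) 0 = vector [0, of_nat k]"
      by (simp add: act_elt v2_eq)
    have j1: "?j = 1"
    proof (rule ccontr)
      assume "?j \<noteq> 1"
      then have "of_nat k / 2 = (-1/4 :: real) + of_int n / 2"
        using e0 by (simp add: a0 ft1 ftne act_elt v2_eq)
      then have "(of_int n :: real) = of_int (2 * int k + 1) / 2" by simp
      then show False using no_half[of n "2 * int k + 1"] by simp
    qed
    then have "m = 0 \<and> of_nat k / 2 = (of_int n / 2 :: real)"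
      using e0 by (simp add: a0 ft1 act_elt v2_eq)
    then have mn: "m = 0" "n = int k" by simp_all
    then have "elt 0 (int k) \<in> N" using p1 phi by simp
    then have "snd (elt 0 (int k)) = mat 1" using tr by (auto simp: piTrans_def)
    then have ev: "even (int k)"
    proof (rule contrapos_pp)
      assume "odd (int k)"
      then have "snd (elt 0 (int k)) = Rm" by (simp add: elt_def)
      moreover have "Rm \<noteq> mat 1" by (simp add: Rm_def m2_eq mat_def)
      ultimately show "snd (elt 0 (int k)) \<noteq> mat 1" by simp
    qed
    then have "even k" by simp
    define k' where "k' = k div 2"
    have k': "k = 2 * k'" using \<open>even k\<close> unfolding k'_def by simp
    then have "k' < k" "0 < k'" using less.prems by auto
    then have "elt 0 (2 * int k') \<notin> N" using less.IH by blast
    moreover have "elt 0 (int k) = elt 0 (2 * int k')" using k' by simp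
    ultimately show False using \<open>elt 0 (int k) \<in> N\<close> by simp
  qed
qed

lemma exists_k:
  assumes sub: "subgroup N piG" and fin: "finite (rcosets\<^bsub>piG\<^esub> N)"
  shows "\<exists>k>0. elt 0 (2 * int k) \<in> N"
proof -
  define f where "f j = N #>\<^bsub>piG\<^esub> elt 0 (2 * int j)" for j
  have "range f \<subseteq> rcosets\<^bsub>piG\<^esub> N"
    unfolding f_def RCOSETS_def using elt_in by (auto simp: piG_def)
  then have "finite (range f)" using fin finite_subset by blast
  then have "\<not> inj f" using finite_imageD infinite_UNIV_nat by blast
  then obtain i j where ij: "i \<noteq> j" "f i = f j" unfolding inj_def by blast
  obtain i j where ij2: "i < j" "f i = f j"
  proof (cases "i < j")
    case True then show ?thesis using ij that by blast
  next
    case False then have "j < i" using ij by simp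
    then show ?thesis using ij that by metis
  qed
  have one: "aone \<in> N" using subgroup.one_closed[OF sub] by (simp add: piG_def)
  have Nk: "N \<subseteq> piK" using subgroup.subset[OF sub] by (simp add: piG_def)
  have "acomp aone (elt 0 (2 * int j)) = elt 0 (2 * int j)"
    by (simp add: aone_elt acomp_elt isg_def)
  then have "elt 0 (2 * int j) \<in> f j" using one unfolding f_def r_coset_def by (force simp: piG_def)
  then have "elt 0 (2 * int j) \<in> f i" using ij2 by simp
  then obtain h where h: "h \<in> N" "elt 0 (2 * int j) = acomp h (elt 0 (2 * int i))"
    unfolding f_def r_coset_def by (auto simp: piG_def)
  obtain m n where hmn: "h = elt m n" using h(1) Nk piK_iff by blast
  have "elt 0 (2 * int j) = elt m (n + 2 * int i)" using h(2) hmn by (simp add: acomp_elt)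
  then have "0 = m \<and> 2 * int j = n + 2 * int i" by (rule elt_inj)
  then have "m = 0" "n = 2 * int (j - i)" using ij2(1) by auto
  then have "elt 0 (2 * int (j - i)) \<in> N" using h(1) hmn by simp
  then show ?thesis using ij2(1) by (intro exI[of _ "j - i"]) simp
qed

lemma ess: "essential ftilde {orb 0}"
  unfolding essential_def
proof (intro bexI conjI)
  show "aone \<in> piK" by (rule piK.one)
  show "(1::nat) \<in> {1,2}" by simp
  show "{orb 0} = orb ` liftFix ftilde aone 1" by (simp add: liftFix_one)
  show "finite {orb 0}" by simp
  show "\<forall>x\<in>liftFix ftilde aone 1. isolated_fp (\<lambda>y. act aone (ftilde 1 y)) x"
  proof
    fix x assume "x \<in> liftFix ftilde aone 1"
    then have x0: "x = 0" by (simp add: liftFix_one)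
    have fx: "act aone (ftilde 1 y) = y \<longleftrightarrow> y = 0" for y
    proof -
      have "y \<in> liftFix ftilde aone 1 \<longleftrightarrow> y = 0" by (simp add: liftFix_one)
      then show ?thesis by (simp add: liftFix_def)
    qed
    show "isolated_fp (\<lambda>y. act aone (ftilde 1 y)) x"
      unfolding isolated_fp_def x0 using fx by (intro conjI exI[of _ 1]) auto
  qed
  have "(SOME x. x \<in> liftFix ftilde aone 1 \<and> orb x = orb 0) = 0"
    by (rule some_equality) (auto simp: liftFix_one)
  then show "(\<Sum>q\<in>{orb 0}. fp_index (\<lambda>y. act aone (ftilde 1 y))
      (SOME x. x \<in> liftFix ftilde aone 1 \<and> orb x = q)) \<noteq> 0"
    using fp_index_ne by simp
qed

theorem mainTheorem7:
  shows "wd_2valued ftilde \<and> nielsen ftilde = 1 \<and> card (fixpts ftilde) = 1 \<and>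
    \<not> (\<exists>N. subgroup N piG \<and> N \<subseteq> piTrans \<and> finite (rcosets\<^bsub>piG\<^esub> N) \<and>
          (\<forall>\<gamma>\<in>N. \<exists>\<phi> \<sigma>. induced ftilde \<gamma> \<phi> \<sigma> \<and> \<phi> 1 \<in> N \<and> \<phi> 2 \<in> N))"
proof (intro conjI)
  show "wd_2valued ftilde" by (rule wd)
  have "{C \<in> fp_classes ftilde. essential ftilde C} = {{orb 0}}"
    using ess by (auto simp: fp_classes_eq)
  then show "nielsen ftilde = 1" by (simp add: nielsen_def)
  show "card (fixpts ftilde) = 1" by (simp add: fixpts_eq)
  show "\<not> (\<exists>N. subgroup N piG \<and> N \<subseteq> piTrans \<and> finite (rcosets\<^bsub>piG\<^esub> N) \<and>
          (\<forall>\<gamma>\<in>N. \<exists>\<phi> \<sigma>. induced ftilde \<gamma> \<phi> \<sigma> \<and> \<phi> 1 \<in> N \<and> \<phi> 2 \<in> N))"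
  proof
    assume "\<exists>N. subgroup N piG \<and> N \<subseteq> piTrans \<and> finite (rcosets\<^bsub>piG\<^esub> N) \<and>
          (\<forall>\<gamma>\<in>N. \<exists>\<phi> \<sigma>. induced ftilde \<gamma> \<phi> \<sigma> \<and> \<phi> 1 \<in> N \<and> \<phi> 2 \<in> N)"
    then obtain N where "subgroup N piG" "N \<subseteq> piTrans" "finite (rcosets\<^bsub>piG\<^esub> N)"
      "\<forall>\<gamma>\<in>N. \<exists>\<phi> \<sigma>. induced ftilde \<gamma> \<phi> \<sigma> \<and> \<phi> 1 \<in> N \<and> \<phi> 2 \<in> N" by blast
    note h = this
    obtain k where k: "0 < k" "elt 0 (2 * int k) \<in> N" using exists_k[OF h(1) h(3)] by blast
    show False using descent[OF h(1) h(2) h(4) k(1)] k(2) by simp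
  qed
qed


end
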